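(* In the setting of $n=2^q$ identical fermions injected in the input state $(1+nc,\dots,n+nc)$ ($0\le c\le 2^k-1$) of the Sylvester interferometer $\frac{1}{\sqrt m}H(m)$ with $m=2^{k+q}$, the number of non-suppressed output states is exactly $(m/n)^n=2^{kn}$, out of $\binom{m+n-1}{n}$ possible $n$-particle output states.
   Context: For $m=2^p$, the Sylvester matrix $H(m)$ is defined recursively by $H(1)=[1]$ and $H(2^p)=\begin{bmatrix}H(2^{p-1})&H(2^{p-1})\\ H(2^{p-1})&-H(2^{p-1})\end{bmatrix}$, rows and columns indexed $1,\dots,m$. An $n$-particle output state on $m$ modes is a nondecreasing tuple $\vec t=(t_1\le\dots\le t_n)$ with $t_i\in\{1,\dots,m\}$; $\mu_k(\vec t)=|\{i:t_i=k\}|$. For input $\vec s$ and output $\vec t$, the scattering matrix is $S_{i,j}=U_{t_i,s_j}$ with $U=\frac{1}{\sqrt m}H(m)$, and the fermionic amplitude is $\det S/\sqrt{\prod_k\mu_k(\vec s)!\prod_k\mu_k(\vec t)!}$. An output state is suppressed if its amplitude is zero. *)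

theory Defs
  imports Main "Jordan_Normal_Form.Determinant"
begin

text \<open>Sylvester matrix H(2^p), rows/columns indexed 1..2^p, defined recursively by
  H(1) = [1], H(2^(p+1)) = [[H,H],[H,-H]].\<close>
fun sylv :: "nat \<Rightarrow> nat \<Rightarrow> nat \<Rightarrow> int" where
  "sylv 0 i j = 1"
| "sylv (Suc p) i j =
     (if i \<le> 2^p then (if j \<le> 2^p then sylv p i j else sylv p i (j - 2^p))
      else (if j \<le> 2^p then sylv p (i - 2^p) j else - sylv p (i - 2^p) (j - 2^p)))"

definition sylvU :: "nat \<Rightarrow> nat \<Rightarrow> nat \<Rightarrow> real" where
  "sylvU p i j = real_of_int (sylv p i j) / sqrt (2 ^ p)"

definition output_states :: "nat \<Rightarrow> nat \<Rightarrow> nat list set" where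
  "output_states m n = {t. length t = n \<and> sorted t \<and> set t \<subseteq> {1..m}}"

definition mu :: "nat list \<Rightarrow> nat \<Rightarrow> nat" where
  "mu t k = count_list t k"

text \<open>Scattering matrix S_{i,j} = U_{t_i, s_j} (0-based list/matrix indices).\<close>
definition scattering :: "nat \<Rightarrow> nat list \<Rightarrow> nat list \<Rightarrow> real mat" where
  "scattering p s t = mat (length t) (length s) (\<lambda>(i, j). sylvU p (t ! i) (s ! j))"

definition fermion_amplitude :: "nat \<Rightarrow> nat list \<Rightarrow> nat list \<Rightarrow> real" where
  "fermion_amplitude p s t =
     det (scattering p s t) /
     sqrt (real ((\<Prod>k\<in>{1..2^p}. fact (mu s k)) * (\<Prod>k\<in>{1..2^p}. fact (mu t k))))"

definition suppressed :: "nat \<Rightarrow> nat list \<Rightarrow> nat list \<Rightarrow> bool" where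
  "suppressed p s t \<longleftrightarrow> fermion_amplitude p s t = 0"

end

theory Submission imports Defs "HOL-Library.Multiset" begin


lemma sylv_pm: "sylv p i j = 1 \<or> sylv p i j = -1"
  by (induction p arbitrary: i j) auto

lemma sylv_sq: "sylv p i j * sylv p i j = 1"
  using sylv_pm[of p i j] by auto

lemma sylv_kron:
  assumes "a < 2^q" "b < 2^q" "x < 2^p" "y < 2^p"
  shows "sylv (p+q) (a+1 + 2^q*x) (b+1 + 2^q*y) = sylv p (x+1) (y+1) * sylv q (a+1) (b+1)"
  using assms
proof (induction p arbitrary: x y)
  case 0
  then show ?case by simp
next
  case (Suc p)
  have e: "Suc p + q = Suc (p+q)" by simp
  have M: "(2::nat)^(p+q) = 2^q * 2^p" by (simp add: power_add)
  have ix: "(a+1 + 2^q*x \<le> 2^(p+q)) = (x < 2^p)"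
  proof
    assume h: "a+1 + 2^q*x \<le> 2^(p+q)"
    show "x < 2^p"
    proof (rule ccontr)
      assume "\<not> x < 2^p" then have "2^q * 2^p \<le> (2::nat)^q*x" by simp
      then show False using h M by linarith
    qed
  next
    assume "x < 2^p" then have "x + 1 \<le> 2^p" by simp
    then have "2^q*(x+1) \<le> (2::nat)^q * 2^p" by (rule mult_le_mono2)
    then show "a+1 + 2^q*x \<le> 2^(p+q)" using Suc.prems M by (simp add: algebra_simps)
  qed
  have iy: "(b+1 + 2^q*y \<le> 2^(p+q)) = (y < 2^p)"
  proof
    assume h: "b+1 + 2^q*y \<le> 2^(p+q)"
    show "y < 2^p"
    proof (rule ccontr)
      assume "\<not> y < 2^p" then have "2^q * 2^p \<le> (2::nat)^q*y" by simp
      then show False using h M by linarith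
    qed
  next
    assume "y < 2^p" then have "y + 1 \<le> 2^p" by simp
    then have "2^q*(y+1) \<le> (2::nat)^q * 2^p" by (rule mult_le_mono2)
    then show "b+1 + 2^q*y \<le> 2^(p+q)" using Suc.prems M by (simp add: algebra_simps)
  qed
  have sx: "a+1 + 2^q*x - 2^(p+q) = a+1 + 2^q*(x - 2^p)" if "\<not> x < 2^p"
  proof -
    have le: "2^q*2^p \<le> (2::nat)^q*x" using that by (intro mult_le_mono2) simp
    have "a+1+2^q*x - 2^q*2^p = a+1+(2^q*x - (2::nat)^q*2^p)" using le by arith
    then show ?thesis using M by (simp add: diff_mult_distrib2)
  qed
  have sy: "b+1 + 2^q*y - 2^(p+q) = b+1 + 2^q*(y - 2^p)" if "\<not> y < 2^p"
  proof -
    have le: "2^q*2^p \<le> (2::nat)^q*y" using that by (intro mult_le_mono2) simp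
    have "b+1+2^q*y - 2^q*2^p = b+1+(2^q*y - (2::nat)^q*2^p)" using le by arith
    then show ?thesis using M by (simp add: diff_mult_distrib2)
  qed
  have xl: "\<not> x < 2^p \<Longrightarrow> x - 2^p < 2^p" using Suc.prems by simp
  have yl: "\<not> y < 2^p \<Longrightarrow> y - 2^p < 2^p" using Suc.prems by simp
  show ?case unfolding e sylv.simps(2)[of "p+q"] ix iy
    using Suc.IH[of x y] Suc.IH[of "x - 2^p" y] Suc.IH[of x "y - 2^p"] Suc.IH[of "x - 2^p" "y - 2^p"]
      sx sy xl yl Suc.prems
    by (auto simp: Suc_diff_le)
qed

lemma sum_double: "(\<Sum>j<2*M. f j) = (\<Sum>j<M. f j) + (\<Sum>j<M. f (j + M::nat))"
proof -
  have e: "{..<2*M} = {..<M} \<union> {M..<2*M}" by auto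
  have "(\<Sum>j<2*M. f j) = (\<Sum>j<M. f j) + (\<Sum>j\<in>{M..<2*M}. f j)"
    unfolding e by (rule sum.union_disjoint) auto
  also have "(\<Sum>j\<in>{M..<2*M}. f j) = (\<Sum>j<M. f (j + M))"
    using sum.shift_bounds_nat_ivl[of f 0 M M] by (simp add: lessThan_atLeast0 mult_2)
  finally show ?thesis .
qed

lemma sylv_orth:
  assumes "a < 2^q" "b < 2^q"
  shows "(\<Sum>j<2^q. sylv q (a+1) (j+1) * sylv q (b+1) (j+1)) = (if a = b then 2^q else 0)"
  using assms
proof (induction q arbitrary: a b)
  case 0
  then show ?case by simp
next
  case (Suc q)
  let ?f = "\<lambda>j. sylv (Suc q) (a+1) (j+1) * sylv (Suc q) (b+1) (j+1)"
  have "(\<Sum>j<2^Suc q. ?f j) = (\<Sum>j<2^q. ?f j) + (\<Sum>j<2^q. ?f (j + 2^q))"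
    using sum_double[where M="2^q" and f="?f"] by simp
  also have "\<dots> = (if a = b then 2^Suc q else 0)"
  proof -
    define a' where "a' = (if a < 2^q then a else a - 2^q)"
    define b' where "b' = (if b < 2^q then b else b - 2^q)"
    have a': "a' < 2^q" using Suc.prems a'_def by auto
    have b': "b' < 2^q" using Suc.prems b'_def by auto
    define sa :: int where "sa = (if a < 2^q then 1 else -1)"
    define sb :: int where "sb = (if b < 2^q then 1 else -1)"
    have f1: "\<And>j. j < 2^q \<Longrightarrow> ?f j = sylv q (a'+1) (j+1) * sylv q (b'+1) (j+1)"
      using Suc.prems by (auto simp: a'_def b'_def Suc_diff_le)
    have f2: "\<And>j. j < 2^q \<Longrightarrow> ?f (j+2^q) = sa * sb * (sylv q (a'+1) (j+1) * sylv q (b'+1) (j+1))"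
      using Suc.prems by (auto simp: a'_def b'_def sa_def sb_def Suc_diff_le)
    have g1: "(\<Sum>j<2^q. ?f j) = (\<Sum>j<2^q. sylv q (a'+1) (j+1) * sylv q (b'+1) (j+1))"
      by (rule sum.cong) (use f1 in auto)
    have g2: "(\<Sum>j<2^q. ?f (j+2^q)) = (\<Sum>j<2^q. sa * sb * (sylv q (a'+1) (j+1) * sylv q (b'+1) (j+1)))"
      by (rule sum.cong) (use f2 in auto)
    have "(\<Sum>j<2^q. ?f j) + (\<Sum>j<2^q. ?f (j + 2^q)) =
       (1 + sa*sb) * (\<Sum>j<2^q. sylv q (a'+1) (j+1) * sylv q (b'+1) (j+1))"
      unfolding g1 g2 by (simp add: sum_distrib_left[symmetric] distrib_right)
    also have "\<dots> = (1 + sa*sb) * (if a' = b' then 2^q else 0)"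
      using Suc.IH[OF a' b'] by simp
    also have "\<dots> = (if a = b then 2^Suc q else 0)"
      using Suc.prems by (auto simp: a'_def b'_def sa_def sb_def)
    finally show ?thesis .
  qed
  finally show ?case .
qed



lemma det_char:
  fixes k q c :: nat and t :: "nat list"
  assumes c: "c < 2^k" and lt: "length t = 2^q" and rng: "set t \<subseteq> {1..2^(k+q)}"
  shows "det (scattering (k+q) (map (\<lambda>i. i + 2^q*c) [1..<2^q+1]) t) = 0
     \<longleftrightarrow> \<not> inj_on (\<lambda>i. (t!i - 1) mod 2^q) {..<2^q}"
proof -
  define n :: nat where "n = 2^q"
  define s where "s = map (\<lambda>i. i + 2^q*c) [1..<2^q+1]"
  define S where "S = scattering (k+q) s t"
  define \<rho> where "\<rho> i = (t!i - 1) mod n" for i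
  define h where "h i = (t!i - 1) div n" for i
  define \<sigma> where "\<sigma> i = real_of_int (sylv k (h i + 1) (c+1))" for i
  define H where "H r j = real_of_int (sylv q (r+1) (j+1))" for r j
  define r where "r = sqrt (2^(k+q))"
  have npos: "n > 0" by (simp add: n_def)
  have rr: "r * r = 2^(k+q)" by (simp add: r_def)
  have rpos: "r > 0" by (simp add: r_def)
  have ls: "length s = n" by (simp add: s_def n_def del: upt_Suc)
  have tge: "i < n \<Longrightarrow> 1 \<le> t!i \<and> t!i \<le> 2^(k+q)" for i
  proof -
    assume "i < n" then have "t!i \<in> set t" using lt by (simp add: n_def)
    then show ?thesis using rng by auto
  qed
  have ti: "i < n \<Longrightarrow> t!i = \<rho> i + 1 + 2^q * h i" for i
  proof -
    assume i: "i < n"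
    have "t!i - 1 = (t!i - 1) mod n + n * ((t!i - 1) div n)" by simp
    then show ?thesis using tge[OF i] unfolding \<rho>_def h_def n_def by linarith
  qed
  have hi: "i < n \<Longrightarrow> h i < 2^k" for i
  proof -
    assume i: "i < n"
    have "t!i \<le> 2^k * n" using tge[OF i] by (simp add: n_def power_add mult.commute)
    then have "t!i - 1 < 2^k * n" using tge[OF i] by linarith
    then show ?thesis unfolding h_def by (simp add: less_mult_imp_div_less)
  qed
  have rhoi: "\<rho> i < 2^q" for i unfolding \<rho>_def n_def by simp
  have sj: "j < n \<Longrightarrow> s!j = j + 1 + 2^q*c" for j
    by (simp add: s_def n_def nth_map nth_upt del: upt_Suc)
  have Sc: "S \<in> carrier_mat n n" using lt ls by (simp add: S_def scattering_def n_def)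
  have Sij: "S$$(i,j) = \<sigma> i * H (\<rho> i) j / r" if "i < n" "j < n" for i j
  proof -
    have "S$$(i,j) = sylvU (k+q) (t!i) (s!j)" using that lt ls by (simp add: S_def scattering_def n_def)
    also have "\<dots> = real_of_int (sylv (k+q) (\<rho> i + 1 + 2^q * h i) (j + 1 + 2^q*c)) / r"
      using ti[OF that(1)] sj[OF that(2)] by (simp add: sylvU_def r_def)
    also have "sylv (k+q) (\<rho> i + 1 + 2^q * h i) (j + 1 + 2^q*c) = sylv k (h i + 1) (c+1) * sylv q (\<rho> i + 1) (j+1)"
      using sylv_kron[of "\<rho> i" q j "h i" k c] rhoi hi[OF that(1)] that c by (simp add: n_def)
    finally show ?thesis by (simp add: \<sigma>_def H_def)
  qed
  have ss: "\<sigma> i * \<sigma> i = 1" for i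
    unfolding \<sigma>_def by (metis of_int_1 of_int_mult sylv_sq)
  show ?thesis
  proof
    assume d0: "det (scattering (k+q) (map (\<lambda>i. i + 2^q*c) [1..<2^q+1]) t) = 0"
    show "\<not> inj_on (\<lambda>i. (t!i - 1) mod 2^q) {..<2^q}"
    proof
      assume inj: "inj_on (\<lambda>i. (t!i - 1) mod 2^q) {..<2^q}"
      have SS: "S * transpose_mat S = (real n / (r*r)) \<cdot>\<^sub>m 1\<^sub>m n"
      proof (rule eq_matI)
        fix i i' assume i: "i < dim_row ((real n / (r*r)) \<cdot>\<^sub>m 1\<^sub>m n)" and i': "i' < dim_col ((real n / (r*r)) \<cdot>\<^sub>m 1\<^sub>m n)"
        then have i: "i < n" and i': "i' < n" by auto
        have "(S * transpose_mat S) $$ (i,i') = (\<Sum>j<n. S$$(i,j) * S$$(i',j))"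
          using Sc i i' by (simp add: scalar_prod_def lessThan_atLeast0)
        also have "\<dots> = (\<Sum>j<n. (\<sigma> i * \<sigma> i' / (r*r)) * (H (\<rho> i) j * H (\<rho> i') j))"
          by (rule sum.cong) (use Sij i i' in auto)
        also have "\<dots> = (\<sigma> i * \<sigma> i' / (r*r)) * real_of_int (\<Sum>j<2^q. sylv q (\<rho> i+1) (j+1) * sylv q (\<rho> i'+1) (j+1))"
          by (simp add: sum_distrib_left H_def n_def)
        also have "\<dots> = (\<sigma> i * \<sigma> i' / (r*r)) * (if \<rho> i = \<rho> i' then real n else 0)"
          using sylv_orth[OF rhoi rhoi] by (simp add: n_def)
        also have "\<dots> = (if i = i' then real n / (r*r) else 0)"
          using inj_onD[OF inj, of i i'] i i' ss by (auto simp: \<rho>_def n_def)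
        finally show "(S * transpose_mat S) $$ (i,i') = ((real n / (r*r)) \<cdot>\<^sub>m 1\<^sub>m n) $$ (i,i')"
          using i i' by simp
      qed (use Sc in auto)
      have dd: "det (S * transpose_mat S) = det S * det S"
        using det_mult[OF Sc, of "transpose_mat S"] Sc det_transpose[OF Sc] by simp
      have d0': "det S = 0" using d0 by (simp add: S_def s_def)
      have "det ((real n / (r*r)) \<cdot>\<^sub>m 1\<^sub>m n) = 0" using dd d0' SS by (metis mult_zero_left)
      moreover have "det ((real n / (r*r)) \<cdot>\<^sub>m 1\<^sub>m n) \<noteq> 0"
        using rpos npos by simp
      ultimately show False by simp
    qed
  next
    assume "\<not> inj_on (\<lambda>i. (t!i - 1) mod 2^q) {..<2^q}"
    then obtain i i' where i: "i < n" and i': "i' < n" and ne: "i \<noteq> i'" and eq: "\<rho> i = \<rho> i'"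
      unfolding inj_on_def \<rho>_def n_def by auto
    define e where "e = \<sigma> i * \<sigma> i'"
    define M where "M = multrow i e S"
    have Mc: "M \<in> carrier_mat n n" using Sc by (simp add: M_def)
    have "row M i = row M i'"
    proof (rule eq_vecI)
      fix j assume "j < dim_vec (row M i')"
      then have j: "j < n" using Mc by simp
      have "M $$ (i,j) = e * S$$(i,j)" using Sc i j by (simp add: M_def)
      also have "\<dots> = e * (\<sigma> i * H (\<rho> i) j / r)" using Sij[OF i j] by simp
      also have "\<dots> = \<sigma> i' * (\<sigma> i * \<sigma> i) * H (\<rho> i) j / r" by (simp add: e_def algebra_simps)
      also have "\<dots> = \<sigma> i' * H (\<rho> i') j / r" using ss[of i] eq by simp
      also have "\<dots> = S$$(i',j)" using Sij[OF i' j] by simp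
      also have "\<dots> = M$$(i',j)" using Sc i' j ne by (simp add: M_def)
      finally show "row M i $ j = row M i' $ j" using Mc i i' j by simp
    qed (use Mc in simp)
    then have "det M = 0" using det_identical_rows[OF Mc ne i i'] by simp
    moreover have "det M = e * det S" unfolding M_def by (rule det_multrow[OF i Sc])
    moreover have "e \<noteq> 0" using ss[of i] ss[of i'] unfolding e_def by (metis mult_eq_0_iff zero_neq_one)
    ultimately show "det (scattering (k+q) (map (\<lambda>i. i + 2^q*c) [1..<2^q+1]) t) = 0"
      by (simp add: S_def s_def)
  qed
qed



lemma count_inj:
  fixes n N :: nat assumes npos: "n > 0"
  shows "card {t \<in> output_states (n*N) n. inj_on (\<lambda>i. (t!i - 1) mod n) {..<n}} = N^n"
proof -
  define A where "A = {t \<in> output_states (n*N) n. inj_on (\<lambda>i. (t!i - 1) mod n) {..<n}}"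
  define P where "P = PiE {..<n} (\<lambda>_. {..<N})"
  define X where "X g = (\<lambda>r. r+1+n*g r) ` {..<n}" for g :: "nat \<Rightarrow> nat"
  define F where "F g = sorted_list_of_set (X g)" for g
  have md: "(r+1+n*x - 1) mod n = r" "(r+1+n*x - 1) div n = x" if "r < n" for r x
    using that by auto
  have injX: "inj_on (\<lambda>r. r+1+n*g r) {..<n}" for g
  proof (rule inj_onI)
    fix r r' assume "r \<in> {..<n}" "r' \<in> {..<n}" "r+1+n*g r = r'+1+n*g r'"
    then have "(r+1+n*g r - 1) mod n = (r'+1+n*g r' - 1) mod n" by simp
    then show "r = r'" using md(1)[of r "g r"] md(1)[of r' "g r'"] \<open>r \<in> {..<n}\<close> \<open>r' \<in> {..<n}\<close> by simp
  qed
  have finX: "finite (X g)" for g by (simp add: X_def)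
  have cardX: "card (X g) = n" for g unfolding X_def using card_image[OF injX] by simp
  have FA: "F g \<in> A" if g: "g \<in> P" for g
  proof -
    let ?t = "F g"
    have st: "set ?t = X g" using finX by (simp add: F_def)
    have len: "length ?t = n" using cardX by (simp add: F_def)
    have dist: "distinct ?t" by (simp add: F_def)
    have sub: "X g \<subseteq> {1..n*N}"
    proof
      fix x assume "x \<in> X g"
      then obtain r where r: "r < n" and x: "x = r+1+n*g r" unfolding X_def by auto
      have "g r < N" using g r unfolding P_def by auto
      then have "n * (g r + 1) \<le> n * N" by (intro mult_le_mono2) simp
      then show "x \<in> {1..n*N}" using x r by (simp add: algebra_simps)
    qed
    have "inj_on (\<lambda>i. (?t!i - 1) mod n) {..<n}"
    proof (rule inj_onI)
      fix i i' assume i: "i \<in> {..<n}" and i': "i' \<in> {..<n}" and e: "(?t!i - 1) mod n = (?t!i' - 1) mod n"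
      have "?t!i \<in> X g" using i len st nth_mem[of i ?t] by auto
      then obtain r where r: "r < n" and x: "?t!i = r+1+n*g r" unfolding X_def by auto
      have "?t!i' \<in> X g" using i' len st nth_mem[of i' ?t] by auto
      then obtain r' where r': "r' < n" and x': "?t!i' = r'+1+n*g r'" unfolding X_def by auto
      have "r = r'" using e x x' md(1)[OF r] md(1)[OF r'] by simp
      then have "?t!i = ?t!i'" using x x' by simp
      then show "i = i'" using dist i i' len by (simp add: nth_eq_iff_index_eq)
    qed
    moreover have "?t \<in> output_states (n*N) n"
      unfolding output_states_def using len st sub by (simp add: F_def)
    ultimately show ?thesis unfolding A_def by simp
  qed
  have injF: "inj_on F P"
  proof (rule inj_onI)
    fix g g' assume g: "g \<in> P" and g': "g' \<in> P" and e: "F g = F g'"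
    have XX: "X g = X g'" using e finX unfolding F_def by (metis sorted_list_of_set.set_sorted_key_list_of_set)
    have "g r = g' r" if r: "r < n" for r
    proof -
      have "r+1+n*g r \<in> X g'" using XX r unfolding X_def by auto
      then obtain r' where r': "r' < n" and x: "r+1+n*g r = r'+1+n*g' r'" unfolding X_def by auto
      have "(r+1+n*g r - 1) mod n = (r'+1+n*g' r' - 1) mod n" using x by simp
      then have "r = r'" using md(1)[OF r, of "g r"] md(1)[OF r', of "g' r'"] by simp
      then show ?thesis using x npos by simp
    qed
    then show "g = g'" using g g' unfolding P_def by (intro PiE_ext) auto
  qed
  have AF: "A \<subseteq> F ` P"
  proof
    fix t assume tA: "t \<in> A"
    define \<rho> where "\<rho> i = (t!i - 1) mod n" for i
    have len: "length t = n" and srt: "sorted t" and st: "set t \<subseteq> {1..n*N}"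
      and inj: "inj_on \<rho> {..<n}" using tA unfolding A_def output_states_def \<rho>_def by auto
    have tge: "1 \<le> t!i \<and> t!i \<le> n*N" if "i < n" for i
    proof -
      have "t!i \<in> set t" using that len by simp
      then show ?thesis using st by auto
    qed
    have dist: "distinct t" unfolding distinct_conv_nth
    proof (intro allI impI)
      fix i i' assume "i < length t" "i' < length t" "i \<noteq> i'"
      then show "t!i \<noteq> t!i'"
      proof -
        assume a: "i < length t" "i' < length t" "i \<noteq> i'"
        show ?thesis
        proof
          assume "t!i = t!i'"
          then have "\<rho> i = \<rho> i'" by (simp add: \<rho>_def)
          then have "i = i'" using inj_onD[OF inj] a len by simp
          then show False using a by simp
        qed
      qed
    qed
    have rimg: "\<rho> ` {..<n} = {..<n}"
    proof (rule endo_inj_surj)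
      show "\<rho> ` {..<n} \<subseteq> {..<n}" using npos by (auto simp: \<rho>_def)
    qed (use inj in simp_all)
    define \<iota> where "\<iota> = the_inv_into {..<n} \<rho>"
    have iota: "\<iota> r < n" "\<rho> (\<iota> r) = r" if "r < n" for r
      using the_inv_into_into[OF inj, of r "{..<n}"] f_the_inv_into_f[OF inj, of r] rimg that
      unfolding \<iota>_def by auto
    have iimg: "\<iota> ` {..<n} = {..<n}"
      unfolding \<iota>_def using the_inv_into_onto[OF inj] rimg by simp
    define g where "g = (\<lambda>r\<in>{..<n}. (t!(\<iota> r) - 1) div n)"
    have gP: "g \<in> P" unfolding P_def
    proof
      fix r assume r: "r \<in> {..<n}"
      have r': "r < n" using r by simp
      have "t!(\<iota> r) \<le> N * n" using tge[OF iota(1)[OF r']] by (simp add: mult.commute)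
      then have "t!(\<iota> r) - 1 < N * n" using tge[OF iota(1)[OF r']] by linarith
      then show "g r \<in> {..<N}" using r by (simp add: g_def less_mult_imp_div_less)
    qed (simp add: g_def)
    have "X g = set t"
    proof -
      have "X g = (\<lambda>r. t!(\<iota> r)) ` {..<n}"
        unfolding X_def
      proof (rule image_cong[OF refl])
        fix r assume r: "r \<in> {..<n}"
        have r': "r < n" using r by simp
        have e1: "t!(\<iota> r) - 1 = (t!(\<iota> r) - 1) mod n + n * ((t!(\<iota> r) - 1) div n)" by simp
        have e2: "(t!(\<iota> r) - 1) mod n = r" using iota(2)[OF r'] by (simp add: \<rho>_def)
        have e3: "g r = (t!(\<iota> r) - 1) div n" using r by (simp add: g_def)
        show "r+1+n*g r = t!(\<iota> r)" unfolding e3 using e1 e2 tge[OF iota(1)[OF r']] by linarith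
      qed
      also have "\<dots> = (\<lambda>i. t!i) ` (\<iota> ` {..<n})" by (simp add: image_image)
      also have "\<dots> = (\<lambda>i. t!i) ` {..<length t}" using iimg len by simp
      also have "\<dots> = set t" by (auto simp: set_conv_nth)
      finally show ?thesis .
    qed
    then have "F g = t" unfolding F_def using dist srt
      by (simp add: sorted_list_of_set.idem_if_sorted_distinct)
    then show "t \<in> F ` P" using gP by blast
  qed
  have "F ` P \<subseteq> A" using FA by blast
  then have "A = F ` P" using AF by blast
  then have "card A = card P" using card_image[OF injF] by simp
  also have "card P = N^n" unfolding P_def by (simp add: card_PiE)
  finally show ?thesis unfolding A_def .
qed



lemma card_os: "card (output_states m n) = (m + n - 1) choose n"
proof -
  have inj: "inj_on mset (output_states m n)"
  proof (rule inj_onI)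
    fix xs ys assume a: "xs \<in> output_states m n" "ys \<in> output_states m n" and e: "mset xs = mset ys"
    have "sorted xs" "sorted ys" using a by (auto simp: output_states_def)
    then have "xs = sort xs" "ys = sort ys" by (simp_all add: sorted_sort_id)
    moreover have "sort xs = sort ys"
      using e sorted_list_of_multiset_mset[of xs] sorted_list_of_multiset_mset[of ys] by simp
    ultimately show "xs = ys" by simp
  qed
  have img: "mset ` output_states m n = multisets_of_size {1..m} n"
  proof
    show "mset ` output_states m n \<subseteq> multisets_of_size {1..m} n"
      by (auto simp: output_states_def multisets_of_size_def)
  next
    show "multisets_of_size {1..m} n \<subseteq> mset ` output_states m n"
    proof
      fix M assume M: "M \<in> multisets_of_size {1..m} n"
      obtain xs where xs: "M = mset xs" using ex_mset[of M] by metis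
      let ?t = "sort xs"
      have "?t \<in> output_states m n"
        using M unfolding output_states_def multisets_of_size_def xs by simp
      moreover have "mset ?t = M" by (simp add: xs)
      ultimately show "M \<in> mset ` output_states m n" by (metis image_eqI)
    qed
  qed
  have "card (output_states m n) = card (multisets_of_size {1..m} n)"
    using card_image[OF inj] img by simp
  also have "\<dots> = (m + n - 1) choose n" by (simp add: card_multisets_of_size)
  finally show ?thesis .
qed



lemma fact_prod_pos: "(0::nat) < (\<Prod>x\<in>A. fact (f x))"
  by (rule prod_pos) simp

theorem mainTheorem13:
  fixes k q c :: nat
  assumes "c \<le> 2 ^ k - 1"
  shows "card {t \<in> output_states (2 ^ (k + q)) (2 ^ q).
            \<not> suppressed (k + q) (map (\<lambda>i. i + 2 ^ q * c) [1..<2 ^ q + 1]) t}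
           = (2 ^ (k + q) div 2 ^ q) ^ (2 ^ q)
       \<and> (2 ^ (k + q) div 2 ^ q) ^ (2 ^ q) = (2::nat) ^ (k * 2 ^ q)
       \<and> card (output_states (2 ^ (k + q)) (2 ^ q)) = (2 ^ (k + q) + 2 ^ q - 1) choose (2 ^ q)"
proof -
  let ?s = "map (\<lambda>i. i + 2 ^ q * c) [1..<2 ^ q + 1]"
  have c: "c < 2^k" using assms by (metis One_nat_def Suc_pred le_imp_less_Suc pos2 zero_less_power)
  have m: "(2::nat)^(k+q) = 2^q * 2^k" by (simp add: power_add mult.commute)
  have dv: "(2::nat)^(k+q) div 2^q = 2^k" by (simp add: m)
  have supp: "suppressed (k+q) ?s t \<longleftrightarrow> det (scattering (k+q) ?s t) = 0" for t
  proof -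
    have "(\<Prod>k\<in>{1..2^(k+q)}. fact (mu ?s k)) * (\<Prod>k\<in>{1..2^(k+q)}. fact (mu t k)) > (0::nat)"
      by (rule mult_pos_pos; rule fact_prod_pos)
    then have "sqrt (real ((\<Prod>k\<in>{1..2^(k+q)}. fact (mu ?s k)) * (\<Prod>k\<in>{1..2^(k+q)}. fact (mu t k)))) > 0"
      by (metis of_nat_0_less_iff real_sqrt_gt_zero)
    then show ?thesis unfolding suppressed_def fermion_amplitude_def divide_eq_0_iff
      by (metis order_less_irrefl)
  qed
  have set_eq: "{t \<in> output_states (2 ^ (k + q)) (2 ^ q). \<not> suppressed (k + q) ?s t}
      = {t \<in> output_states (2^q * 2^k) (2^q). inj_on (\<lambda>i. (t!i - 1) mod 2^q) {..<2^q}}"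
  proof (rule Collect_cong)
    fix t
    show "(t \<in> output_states (2 ^ (k + q)) (2 ^ q) \<and> \<not> suppressed (k + q) ?s t) =
          (t \<in> output_states (2^q * 2^k) (2^q) \<and> inj_on (\<lambda>i. (t!i - 1) mod 2^q) {..<2^q})"
    proof (cases "t \<in> output_states (2 ^ (k + q)) (2 ^ q)")
      case True
      then have "length t = 2^q" "set t \<subseteq> {1..2^(k+q)}" by (auto simp: output_states_def)
      from det_char[OF c this] True show ?thesis unfolding supp m by simp
    next
      case False
      then show ?thesis unfolding m by simp
    qed
  qed
  have "card {t \<in> output_states (2 ^ (k + q)) (2 ^ q). \<not> suppressed (k + q) ?s t} = (2^k)^(2^q)"
    unfolding set_eq by (rule count_inj) simp
  moreover have "(2^k)^(2^q) = (2::nat) ^ (k * 2 ^ q)" by (simp add: power_mult)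
  moreover have "card (output_states (2 ^ (k + q)) (2 ^ q)) = (2 ^ (k + q) + 2 ^ q - 1) choose (2 ^ q)"
    by (rule card_os)
  ultimately show ?thesis unfolding dv by simp
qed

end
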